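(* Let $\phi$ be the standard Gaussian density, $h$ a probability density on $\mathbb R$ that is symmetric, positive and decreasing on $[0,\infty)$, $m\ge0$ and $c_0>0$. There exists $c>0$ depending only on $h,m,c_0$ such that for all $n\ge1$, $\sigma>0$ and real numbers $X$, $x\ge0$ with $|X|\le x$ and $\sigma\le c_0x$, $$\int_{\mathbb R}|\theta|^m\,\phi(\sqrt n(X-\theta))\,h(\theta/\sigma)\,d\theta\ \ge\ c\,\sigma^{m+1}\phi(\sqrt n\,x).$$ *)

theory Defs
  imports "HOL-Probability.Probability"
begin

definition prob_density_real :: "(real \<Rightarrow> real) \<Rightarrow> bool" where
  "prob_density_real h \<longleftrightarrow> h \<in> borel_measurable borel \<and> (\<forall>t. 0 \<le> h t)
     \<and> integrable lborel h \<and> (\<integral>t. h t \<partial>lborel) = 1"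

end

theory Submission
  imports Defs
begin

lemma lower_int:
  fixes f :: "real \<Rightarrow> real"
  assumes f: "integrable lborel f" and nn: "\<And>t. 0 \<le> f t"
    and lb: "\<And>t. a \<le> t \<Longrightarrow> t \<le> b \<Longrightarrow> C \<le> f t" and ab: "a \<le> b"
  shows "C * (b - a) \<le> (\<integral>t. f t \<partial>lborel)"
proof -
  have i: "integrable lborel (\<lambda>t. C * indicator {a..b} t)"
    using borel_integrable_atLeastAtMost[of a b "\<lambda>_. C"] by simp
  have "(\<integral>t. C * indicator {a..b} t \<partial>lborel) \<le> (\<integral>t. f t \<partial>lborel)"
    by (rule integral_mono[OF i f]) (auto simp: indicator_def nn lb)
  moreover have "(\<integral>t. C * indicator {a..b} t \<partial>lborel) = C * (b - a)"
    using ab by auto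
  ultimately show ?thesis using ab by simp
qed

lemma pow_bound:
  fixes a b :: real and k :: nat
  assumes "0 \<le> a" "0 \<le> b"
  shows "(a + b) ^ k \<le> 2 ^ k * (a ^ k + b ^ k)"
proof -
  have "(a + b) ^ k \<le> (2 * max a b) ^ k"
    by (rule power_mono) (use assms in auto)
  also have "\<dots> = 2 ^ k * max a b ^ k" by (simp add: power_mult_distrib)
  also have "max a b ^ k \<le> a ^ k + b ^ k"
    using assms by (auto simp: max_def)
  hence "2 ^ k * max a b ^ k \<le> 2 ^ k * (a ^ k + b ^ k)" by simp
  finally show ?thesis .
qed

lemma powr_bound:
  fixes t m :: real
  assumes "m \<ge> 0"
  shows "\<bar>t\<bar> powr m \<le> 1 + \<bar>t\<bar> ^ nat \<lceil>m\<rceil>"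
proof (cases "\<bar>t\<bar> \<le> 1")
  case True
  then have "\<bar>t\<bar> powr m \<le> 1"
    using assms by (intro powr_le1) auto
  then show ?thesis by (smt (verit) zero_le_power abs_ge_zero)
next
  case False
  then have "\<bar>t\<bar> powr m \<le> \<bar>t\<bar> powr (nat \<lceil>m\<rceil>)"
    by (intro powr_mono) (auto simp: real_nat_ceiling_ge)
  also have "\<dots> = \<bar>t\<bar> ^ nat \<lceil>m\<rceil>" using False by (simp add: powr_realpow)
  finally show ?thesis by simp
qed

lemma integrable_main:
  fixes h :: "real \<Rightarrow> real" and m X \<sigma> :: real and n :: nat
  assumes hm: "h \<in> borel_measurable borel" and hb: "\<And>t. 0 \<le> h t" "\<And>t. h t \<le> H"
    and m: "m \<ge> 0" and n: "n \<ge> 1"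
  shows "integrable lborel (\<lambda>\<theta>. \<bar>\<theta>\<bar> powr m * std_normal_density (sqrt (real n) * (X - \<theta>)) * h (\<theta> / \<sigma>))"
proof -
  define k where "k = nat \<lceil>m\<rceil>"
  define g where "g = (\<lambda>\<theta>. H * (normal_density X 1 \<theta> + 2 ^ k * (normal_density X 1 \<theta> * \<bar>\<theta> - X\<bar> ^ k)
     + 2 ^ k * \<bar>X\<bar> ^ k * normal_density X 1 \<theta>))"
  have gi: "integrable lborel g"
  proof -
    have a: "integrable lborel (\<lambda>\<theta>. 2 ^ k * (normal_density X 1 \<theta> * \<bar>\<theta> - X\<bar> ^ k))"
      by (rule integrable_mult_right, rule integrable_normal_moment_abs) simp
    have b: "integrable lborel (\<lambda>\<theta>. 2 ^ k * \<bar>X\<bar> ^ k * normal_density X 1 \<theta>)"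
      by (rule integrable_mult_right) simp
    have c: "integrable lborel (\<lambda>\<theta>. normal_density X 1 \<theta> + 2 ^ k * (normal_density X 1 \<theta> * \<bar>\<theta> - X\<bar> ^ k)
     + 2 ^ k * \<bar>X\<bar> ^ k * normal_density X 1 \<theta>)"
      by (intro Bochner_Integration.integrable_add a b) simp
    show ?thesis unfolding g_def
      by (rule integrable_mult_right) (rule c)
  qed
  show ?thesis
  proof (rule Bochner_Integration.integrable_bound[OF gi])
    show "(\<lambda>\<theta>. \<bar>\<theta>\<bar> powr m * std_normal_density (sqrt (real n) * (X - \<theta>)) * h (\<theta> / \<sigma>)) \<in> borel_measurable lborel"
      using hm by (simp add: normal_density_def) measurable
    show "AE \<theta> in lborel. norm (\<bar>\<theta>\<bar> powr m * std_normal_density (sqrt (real n) * (X - \<theta>)) * h (\<theta> / \<sigma>)) \<le> norm (g \<theta>)"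
    proof (rule AE_I2)
      fix \<theta> :: real
      have H0: "0 \<le> H" using hb(1)[of 0] hb(2)[of 0] by simp
      have phi: "std_normal_density (sqrt (real n) * (X - \<theta>)) \<le> normal_density X 1 \<theta>"
      proof -
        have "(\<theta> - X)\<^sup>2 \<le> real n * (X - \<theta>)\<^sup>2"
          using n by (simp add: power2_commute mult_le_cancel_right1)
        then have "exp (- (real n * (X - \<theta>)\<^sup>2 / 2)) \<le> exp (- ((\<theta> - X)\<^sup>2 / 2))"
          by simp
        then show ?thesis
          by (simp add: normal_density_def power_mult_distrib divide_right_mono)
      qed
      have pw: "\<bar>\<theta>\<bar> powr m \<le> 1 + 2 ^ k * (\<bar>\<theta> - X\<bar> ^ k + \<bar>X\<bar> ^ k)"
      proof -
        have "\<bar>\<theta>\<bar> ^ k \<le> (\<bar>\<theta> - X\<bar> + \<bar>X\<bar>) ^ k"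
          by (rule power_mono) auto
        also have "\<dots> \<le> 2 ^ k * (\<bar>\<theta> - X\<bar> ^ k + \<bar>X\<bar> ^ k)" by (rule pow_bound) auto
        finally show ?thesis using powr_bound[OF m, of \<theta>] unfolding k_def by linarith
      qed
      have nd: "0 \<le> normal_density X 1 \<theta>" by simp
      have "\<bar>\<theta>\<bar> powr m * std_normal_density (sqrt (real n) * (X - \<theta>)) * h (\<theta> / \<sigma>)
          \<le> (1 + 2 ^ k * (\<bar>\<theta> - X\<bar> ^ k + \<bar>X\<bar> ^ k)) * normal_density X 1 \<theta> * H"
        by (intro mult_mono pw phi hb) auto
      also have "\<dots> = g \<theta>" unfolding g_def by (simp add: algebra_simps)
      finally have "\<bar>\<theta>\<bar> powr m * std_normal_density (sqrt (real n) * (X - \<theta>)) * h (\<theta> / \<sigma>) \<le> g \<theta>" .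
      moreover have "0 \<le> \<bar>\<theta>\<bar> powr m * std_normal_density (sqrt (real n) * (X - \<theta>)) * h (\<theta> / \<sigma>)"
        using hb(1) by simp
      ultimately show "norm (\<bar>\<theta>\<bar> powr m * std_normal_density (sqrt (real n) * (X - \<theta>)) * h (\<theta> / \<sigma>)) \<le> norm (g \<theta>)"
        by simp
    qed
  qed
qed

lemma phi_mono:
  assumes "\<bar>u\<bar> \<le> \<bar>v\<bar>"
  shows "std_normal_density v \<le> std_normal_density u"
proof -
  have "u\<^sup>2 \<le> v\<^sup>2" using assms by (simp add: abs_le_square_iff)
  then have "exp (- (v\<^sup>2 / 2)) \<le> exp (- (u\<^sup>2 / 2))" by simp
  then show ?thesis by (simp add: normal_density_def divide_right_mono)
qed

theorem mainTheorem6: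
  fixes h :: "real \<Rightarrow> real" and m c\<^sub>0 :: real
  assumes dens: "prob_density_real h"
    and symm: "\<And>t. h (- t) = h t"
    and pos: "\<And>t. h t > 0"
    and decr: "\<And>s t. 0 \<le> s \<Longrightarrow> s \<le> t \<Longrightarrow> h t \<le> h s"
    and m: "m \<ge> 0"
    and c0: "c\<^sub>0 > 0"
  shows "\<exists>c>0. \<forall>(n::nat) \<sigma> X x. n \<ge> 1 \<longrightarrow> \<sigma> > 0 \<longrightarrow> x \<ge> 0 \<longrightarrow> \<bar>X\<bar> \<le> x
            \<longrightarrow> \<sigma> \<le> c\<^sub>0 * x \<longrightarrow>
           (\<integral>\<theta>. \<bar>\<theta>\<bar> powr m * std_normal_density (sqrt (real n) * (X - \<theta>)) * h (\<theta> / \<sigma>) \<partial>lborel)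
             \<ge> c * \<sigma> powr (m + 1) * std_normal_density (sqrt (real n) * x)"
proof (intro exI[of _ "h (1 / c\<^sub>0) * (1 / (2 * c\<^sub>0)) powr (m + 1)"] conjI allI impI)
  show "0 < h (1 / c\<^sub>0) * (1 / (2 * c\<^sub>0)) powr (m + 1)"
    using pos c0 by simp
  fix n :: nat and \<sigma> X x :: real
  assume n: "1 \<le> n" and s: "0 < \<sigma>" and x: "0 \<le> x" and Xx: "\<bar>X\<bar> \<le> x" and sx: "\<sigma> \<le> c\<^sub>0 * x"
  have hm: "h \<in> borel_measurable borel" and hnn: "\<And>t. 0 \<le> h t"
    using dens unfolding prob_density_real_def by auto
  have hb: "h t \<le> h 0" for t
  proof (cases "t \<ge> 0")
    case True then show ?thesis using decr[of 0 t] by simp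
  next
    case False then show ?thesis using decr[of 0 "- t"] symm[of t] by simp
  qed
  define f where "f = (\<lambda>\<theta>. \<bar>\<theta>\<bar> powr m * std_normal_density (sqrt (real n) * (X - \<theta>)) * h (\<theta> / \<sigma>))"
  have fi: "integrable lborel f" unfolding f_def
    by (rule integrable_main[OF hm hnn hb m n])
  have fnn: "0 \<le> f t" for t unfolding f_def using hnn by simp
  define d where "d = \<sigma> / c\<^sub>0"
  have d0: "0 < d" using s c0 by (simp add: d_def)
  have dx: "d \<le> x" using sx c0 by (simp add: d_def pos_divide_le_eq mult.commute)
  define C where "C = (d / 2) powr m * std_normal_density (sqrt (real n) * x) * h (1 / c\<^sub>0)"
  have hd: "h (t / \<sigma>) \<ge> h (1 / c\<^sub>0)" if "0 \<le> t" "t \<le> d" for t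
  proof -
    have "t / \<sigma> \<le> 1 / c\<^sub>0" using that s c0 by (simp add: d_def divide_le_eq field_simps)
    then show ?thesis using decr[of "t / \<sigma>" "1 / c\<^sub>0"] that s by simp
  qed
  have key: "C * (d / 2) \<le> (\<integral>\<theta>. f \<theta> \<partial>lborel)"
  proof (cases "X \<ge> 0")
    case True
    have "C * (d - d / 2) \<le> (\<integral>\<theta>. f \<theta> \<partial>lborel)"
    proof (rule lower_int[OF fi fnn])
      fix t assume t: "d / 2 \<le> t" "t \<le> d"
      have "\<bar>sqrt (real n) * (X - t)\<bar> \<le> \<bar>sqrt (real n) * x\<bar>"
        using t True Xx dx d0 by (simp add: abs_mult mult_left_mono)
      then have p: "std_normal_density (sqrt (real n) * x) \<le> std_normal_density (sqrt (real n) * (X - t))"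
        by (rule phi_mono)
      have q: "(d / 2) powr m \<le> \<bar>t\<bar> powr m"
        using t d0 m by (intro powr_mono2) auto
      show "C \<le> f t" unfolding C_def f_def
        using hd[of t] t d0 p q hnn by (intro mult_mono) auto
    qed (use d0 in auto)
    then show ?thesis by simp
  next
    case False
    have "C * (- d / 2 - - d) \<le> (\<integral>\<theta>. f \<theta> \<partial>lborel)"
    proof (rule lower_int[OF fi fnn])
      fix t assume t: "- d \<le> t" "t \<le> - d / 2"
      have "\<bar>sqrt (real n) * (X - t)\<bar> \<le> \<bar>sqrt (real n) * x\<bar>"
        using t False Xx dx d0 by (simp add: abs_mult mult_left_mono)
      then have p: "std_normal_density (sqrt (real n) * x) \<le> std_normal_density (sqrt (real n) * (X - t))"
        by (rule phi_mono)
      have q: "(d / 2) powr m \<le> \<bar>t\<bar> powr m"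
        using t d0 m by (intro powr_mono2) auto
      have r: "h (1 / c\<^sub>0) \<le> h (t / \<sigma>)"
        using hd[of "- t"] t symm[of "t / \<sigma>"] by simp
      show "C \<le> f t" unfolding C_def f_def
        using r t d0 p q hnn by (intro mult_mono) auto
    qed (use d0 in auto)
    then show ?thesis by simp
  qed
  have "C * (d / 2) = h (1 / c\<^sub>0) * (1 / (2 * c\<^sub>0)) powr (m + 1) * \<sigma> powr (m + 1) * std_normal_density (sqrt (real n) * x)"
  proof -
    have "(d / 2) powr m * (d / 2) = (d / 2) powr (m + 1)"
      using d0 by (simp add: powr_add)
    also have "\<dots> = (\<sigma> * (1 / (2 * c\<^sub>0))) powr (m + 1)"
      by (simp add: d_def mult.commute)
    also have "\<dots> = \<sigma> powr (m + 1) * (1 / (2 * c\<^sub>0)) powr (m + 1)"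
      using s c0 by (simp add: powr_divide)
    finally have e: "(d / 2) powr m * (d / 2) = \<sigma> powr (m + 1) * (1 / (2 * c\<^sub>0)) powr (m + 1)" .
    have "C * (d / 2) = ((d / 2) powr m * (d / 2)) * std_normal_density (sqrt (real n) * x) * h (1 / c\<^sub>0)"
      unfolding C_def by (simp only: mult_ac)
    also have "\<dots> = h (1 / c\<^sub>0) * (1 / (2 * c\<^sub>0)) powr (m + 1) * \<sigma> powr (m + 1) * std_normal_density (sqrt (real n) * x)"
      unfolding e by (simp only: mult_ac)
    finally show ?thesis .
  qed
  with key show "h (1 / c\<^sub>0) * (1 / (2 * c\<^sub>0)) powr (m + 1) * \<sigma> powr (m + 1) * std_normal_density (sqrt (real n) * x)
     \<le> (\<integral>\<theta>. \<bar>\<theta>\<bar> powr m * std_normal_density (sqrt (real n) * (X - \<theta>)) * h (\<theta> / \<sigma>) \<partial>lborel)"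
    unfolding f_def by simp
qed

end
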